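(* Let $q'>0$, $e'\in(0,1)$, $q_{\max}>0$, $\mathcal D_1=\{(e,\omega'):0\le e\le1,\ 0\le\omega'\le\pi\}$, $\mathcal D_2=\{(q,\omega):0<q\le q_{\max},\ 0\le\omega\le\pi/2\}$. Then: (i) for each $(q,\omega)\in\mathcal D_2$ and $(e,\omega')\in\mathcal D_1$, $$\delta_{\rm int}(q,e,\omega,\omega')\ge\delta_{\rm int}(q,1,\omega,\pi)=q'-\frac{2q}{1-\cos\omega},\qquad \delta_{\rm ext}(q,e,\omega,\omega')\ge\delta_{\rm ext}(q,0,\omega,\pi)=q-Q';$$ consequently, for given $(q,\omega)\in\mathcal D_2$, the configuration has internal nodes for every $(e,\omega')\in\mathcal D_1$ iff $q'-\frac{2q}{1-\cos\omega}>0$, and external nodes for every $(e,\omega')\in\mathcal D_1$ iff $q-Q'>0$; (ii) if $(q,\omega)\in\mathcal D_2$ satisfies $q'-\frac{2q}{1-\cos\omega}\le0$ and $q-Q'\le0$, then there exists $(e,\omega')\in\mathcal D_1$ with $d^+d^-=0$.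
   Context: For $q>0$, $e\in[0,1]$ and angles $\omega,\omega'$, define $r_{\pm}=\frac{q(1+e)}{1\pm e\cos\omega}$, $r'_{\pm}=\frac{q'(1+e')}{1\pm e'\cos\omega'}$ (extended-real values allowed), $d^+=r'_+-r_+$, $d^-=r'_--r_-$, $\delta_{\rm int}=\min\{d^+,d^-\}$, $\delta_{\rm ext}=\min\{-d^+,-d^-\}$, $Q'=\frac{q'(1+e')}{1-e'}$. Internal nodes means $d^+>0$ and $d^->0$; external nodes means $d^+<0$ and $d^-<0$. *)

theory Defs
  imports "HOL-Analysis.Analysis"
begin

text \<open>Extended-real radii: division by zero in ereal gives infinity times numerator
 (inverse 0 = infinity), so r = +infinity when the denominator vanishes and q(1+e) > 0.\<close>

definition r_plus :: "real \<Rightarrow> real \<Rightarrow> real \<Rightarrow> ereal" where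
  "r_plus q e \<omega> = ereal (q * (1 + e)) / ereal (1 + e * cos \<omega>)"

definition r_minus :: "real \<Rightarrow> real \<Rightarrow> real \<Rightarrow> ereal" where
  "r_minus q e \<omega> = ereal (q * (1 + e)) / ereal (1 - e * cos \<omega>)"

definition d_plus :: "real \<Rightarrow> real \<Rightarrow> real \<Rightarrow> real \<Rightarrow> real \<Rightarrow> real \<Rightarrow> ereal" where
  "d_plus q' e' q e \<omega> \<omega>' = r_plus q' e' \<omega>' - r_plus q e \<omega>"

definition d_minus :: "real \<Rightarrow> real \<Rightarrow> real \<Rightarrow> real \<Rightarrow> real \<Rightarrow> real \<Rightarrow> ereal" where
  "d_minus q' e' q e \<omega> \<omega>' = r_minus q' e' \<omega>' - r_minus q e \<omega>"

definition delta_int :: "real \<Rightarrow> real \<Rightarrow> real \<Rightarrow> real \<Rightarrow> real \<Rightarrow> real \<Rightarrow> ereal" where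
  "delta_int q' e' q e \<omega> \<omega>' = min (d_plus q' e' q e \<omega> \<omega>') (d_minus q' e' q e \<omega> \<omega>')"

definition delta_ext :: "real \<Rightarrow> real \<Rightarrow> real \<Rightarrow> real \<Rightarrow> real \<Rightarrow> real \<Rightarrow> ereal" where
  "delta_ext q' e' q e \<omega> \<omega>' = min (- d_plus q' e' q e \<omega> \<omega>') (- d_minus q' e' q e \<omega> \<omega>')"

definition Qprime :: "real \<Rightarrow> real \<Rightarrow> real" where
  "Qprime q' e' = q' * (1 + e') / (1 - e')"

definition internal_nodes :: "real \<Rightarrow> real \<Rightarrow> real \<Rightarrow> real \<Rightarrow> real \<Rightarrow> real \<Rightarrow> bool" where
  "internal_nodes q' e' q e \<omega> \<omega>' \<longleftrightarrow> d_plus q' e' q e \<omega> \<omega>' > 0 \<and> d_minus q' e' q e \<omega> \<omega>' > 0"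

definition external_nodes :: "real \<Rightarrow> real \<Rightarrow> real \<Rightarrow> real \<Rightarrow> real \<Rightarrow> real \<Rightarrow> bool" where
  "external_nodes q' e' q e \<omega> \<omega>' \<longleftrightarrow> d_plus q' e' q e \<omega> \<omega>' < 0 \<and> d_minus q' e' q e \<omega> \<omega>' < 0"

definition D1 :: "(real \<times> real) set" where
  "D1 = {(e, \<omega>'). 0 \<le> e \<and> e \<le> 1 \<and> 0 \<le> \<omega>' \<and> \<omega>' \<le> pi}"

definition D2 :: "real \<Rightarrow> (real \<times> real) set" where
  "D2 qmax = {(q, \<omega>). 0 < q \<and> q \<le> qmax \<and> 0 \<le> \<omega> \<and> \<omega> \<le> pi / 2}"

end

theory Submission
  imports Defs
begin

lemma prim_bounds:
  fixes q' e' x :: real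
  assumes "q' > 0" "0 < e'" "e' < 1" "-1 \<le> x" "x \<le> 1"
  shows "q' \<le> q' * (1 + e') / (1 + e' * x) \<and> q' * (1 + e') / (1 + e' * x) \<le> Qprime q' e'"
proof -
  have ax: "\<bar>e' * x\<bar> \<le> e'" using assms by (simp add: abs_mult mult_left_le)
  have d: "1 + e' * x > 0" "1 + e' * x \<ge> 1 - e'" "1 + e' * x \<le> 1 + e'"
    using assms ax by (auto simp: abs_le_iff)
  have "q' * (1 + e') / (1 + e' * x) \<ge> q'"
    using d assms by (simp add: mult_imp_le_div_pos)
  moreover have "q' * (1 + e') / (1 + e' * x) \<le> q' * (1 + e') / (1 - e')"
    using d assms by (intro divide_left_mono) auto
  ultimately show ?thesis unfolding Qprime_def by simp
qed

lemma rp_bounds: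
  fixes q e c :: real
  assumes "q > 0" "0 \<le> e" "e \<le> 1" "0 \<le> c" "c \<le> 1"
  shows "q \<le> q * (1 + e) / (1 + e * c)" "c < 1 \<Longrightarrow> q * (1 + e) / (1 + e * c) \<le> 2 * q / (1 - c)"
proof -
  have ec: "0 \<le> e * c" "e * c \<le> e" using assms by (auto simp: mult_left_le)
  have d: "1 + e * c \<ge> 1" using ec by simp
  have "q * (1 + e * c) \<le> q * (1 + e)" using ec assms by simp
  then show "q \<le> q * (1 + e) / (1 + e * c)"
    using d by (simp add: mult_imp_le_div_pos)
  assume c: "c < 1"
  have h: "2 * q * (1 + e * c) - q * (1 + e) * (1 - c) = q * (1 + c - e + 3 * (e * c))"
    by (simp add: algebra_simps)
  have "0 \<le> q * (1 + c - e + 3 * (e * c))" using assms ec by simp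
  then have "q * (1 + e) * (1 - c) \<le> 2 * q * (1 + e * c)" using h by linarith
  then show "q * (1 + e) / (1 + e * c) \<le> 2 * q / (1 - c)"
    using d c by (simp add: field_simps)
qed

lemma rm_bounds:
  fixes q e c :: real
  assumes "q > 0" "0 \<le> e" "e \<le> 1" "0 \<le> c" "c \<le> 1" "e * c < 1"
  shows "q \<le> q * (1 + e) / (1 - e * c)" "c < 1 \<Longrightarrow> q * (1 + e) / (1 - e * c) \<le> 2 * q / (1 - c)"
proof -
  have ec: "0 \<le> e * c" "e * c \<le> e" using assms by (auto simp: mult_left_le)
  have d: "1 - e * c > 0" "1 - e * c \<le> 1" using assms ec by simp_all
  have "q * (1 - e * c) \<le> q * (1 + e)" using ec assms by (intro mult_left_mono) linarith+
  then show "q \<le> q * (1 + e) / (1 - e * c)"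
    using d by (simp add: mult_imp_le_div_pos)
  assume c: "c < 1"
  have h: "2 * q * (1 - e * c) - q * (1 + e) * (1 - c) = q * ((1 - e) * (1 + c))"
    by (simp add: algebra_simps)
  have "0 \<le> q * ((1 - e) * (1 + c))" using assms ec by simp
  then have "q * (1 + e) * (1 - c) \<le> 2 * q * (1 - e * c)" using h by linarith
  then show "q * (1 + e) / (1 - e * c) \<le> 2 * q / (1 - c)"
    using d c by (simp add: field_simps)
qed

lemma partI:
  fixes q' e' q e \<omega> \<omega>' :: real
  assumes q': "q' > 0" and e': "0 < e'" "e' < 1" and q: "q > 0"
    and w: "0 \<le> \<omega>" "\<omega> \<le> pi / 2" and e: "0 \<le> e" "e \<le> 1"
    and w': "0 \<le> \<omega>'" "\<omega>' \<le> pi"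
  shows "delta_int q' e' q e \<omega> \<omega>' \<ge> delta_int q' e' q 1 \<omega> pi
          \<and> delta_int q' e' q 1 \<omega> pi = ereal q' - ereal (2 * q) / ereal (1 - cos \<omega>)
          \<and> delta_ext q' e' q e \<omega> \<omega>' \<ge> delta_ext q' e' q 0 \<omega> pi
          \<and> delta_ext q' e' q 0 \<omega> pi = ereal (q - Qprime q' e')"
proof -
  define c where "c = cos \<omega>"
  have c: "0 \<le> c" "c \<le> 1" unfolding c_def using w by (auto intro: cos_ge_zero)
  define x where "x = cos \<omega>'"
  have x: "-1 \<le> x" "x \<le> 1" unfolding x_def by auto
  define a where "a = q' * (1 + e') / (1 + e' * x)"
  define b where "b = q' * (1 + e') / (1 + e' * (-x))"
  define u where "u = q * (1 + e) / (1 + e * c)"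
  define Q where "Q = Qprime q' e'"
  have ab: "q' \<le> a" "a \<le> Q" "q' \<le> b" "b \<le> Q"
    using prim_bounds[OF q' e' x] prim_bounds[OF q' e', of "-x"] x
    unfolding a_def b_def Q_def by auto
  have qQ: "q' \<le> Q" using ab by simp
  have ax: "1 + e' * x > 0" "1 - e' * x > 0"
  proof -
    have "\<bar>e' * x\<bar> \<le> e'" using e' x by (simp add: abs_mult mult_left_le)
    then have "e' * x \<le> e'" "- (e' * x) \<le> e'" by (auto dest: abs_le_D1 abs_le_D2)
    then show "1 + e' * x > 0" "1 - e' * x > 0" using e' by linarith+
  qed
  have ec: "1 + e * c > 0" using mult_nonneg_nonneg[OF e(1) c(1)] by linarith
  have rp': "r_plus q' e' \<omega>' = ereal a"
    unfolding r_plus_def a_def x_def using ax by (simp add: x_def)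
  have rm': "r_minus q' e' \<omega>' = ereal b"
    unfolding r_minus_def b_def x_def using ax by (simp add: x_def)
  have rp: "r_plus q e \<omega> = ereal u"
    unfolding r_plus_def u_def c_def using ec by (simp add: c_def)
  have u: "q \<le> u" "c < 1 \<Longrightarrow> u \<le> 2 * q / (1 - c)"
    using rp_bounds[OF q e c] unfolding u_def by auto
  have Qpos: "1 - e' > 0" using e' by simp
  have rpPi: "r_plus q' e' pi = ereal Q"
    unfolding r_plus_def Q_def Qprime_def using Qpos by simp
  have rmPi: "r_minus q' e' pi = ereal q'"
    unfolding r_minus_def using e' by simp
  have rp0: "r_plus q 0 \<omega> = ereal q" "r_minus q 0 \<omega> = ereal q"
    unfolding r_plus_def r_minus_def by simp_all
  have rp1: "r_plus q 1 \<omega> = ereal (2 * q / (1 + c))"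
    unfolding r_plus_def c_def using c by (simp add: c_def)
  have ext0: "delta_ext q' e' q 0 \<omega> pi = ereal (q - Q)"
    unfolding delta_ext_def d_plus_def d_minus_def rpPi rmPi rp0 using qQ by (simp add: min_def)
  have rm: "(\<exists>v. r_minus q e \<omega> = ereal v \<and> q \<le> v \<and> (c < 1 \<longrightarrow> v \<le> 2 * q / (1 - c)))
      \<or> (r_minus q e \<omega> = \<infinity> \<and> c = 1)"
  proof (cases "e * c = 1")
    case True
    then have "e = 1" "c = 1" using e c
      by (metis mult_left_le mult.commute mult_le_one order_antisym_conv le_less)+
    then show ?thesis unfolding r_minus_def c_def using q by (simp add: c_def)
  next
    case False
    then have "e * c < 1" using e c by (smt (verit) mult_le_one)
    then show ?thesis using rm_bounds[OF q e c] unfolding r_minus_def c_def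
      by (auto simp: c_def)
  qed
  have ext: "delta_ext q' e' q e \<omega> \<omega>' \<ge> ereal (q - Q)"
    using rm
  proof
    assume "\<exists>v. r_minus q e \<omega> = ereal v \<and> q \<le> v \<and> (c < 1 \<longrightarrow> v \<le> 2 * q / (1 - c))"
    then obtain v where v: "r_minus q e \<omega> = ereal v" "q \<le> v" by blast
    show ?thesis unfolding delta_ext_def d_plus_def d_minus_def rp rp' rm' v using ab u v by simp
  next
    assume "r_minus q e \<omega> = \<infinity> \<and> c = 1"
    then have v: "r_minus q e \<omega> = \<infinity>" by simp
    show ?thesis unfolding delta_ext_def d_plus_def d_minus_def rp rp' rm' v using ab u by simp
  qed
  show ?thesis
  proof (cases "c = 1")
    case True
    have rm1: "r_minus q 1 \<omega> = \<infinity>" unfolding r_minus_def using True q by (simp add: c_def[symmetric])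
    have X: "ereal (2 * q) / ereal (1 - cos \<omega>) = \<infinity>" using True q by (simp add: c_def[symmetric])
    have I1: "delta_int q' e' q 1 \<omega> pi = - \<infinity>"
      unfolding delta_int_def d_plus_def d_minus_def rm1 rmPi by simp
    show ?thesis using ext ext0 I1 X unfolding Q_def by simp
  next
    case False
    then have c1: "c < 1" using c by simp
    have rm1: "r_minus q 1 \<omega> = ereal (2 * q / (1 - c))" unfolding r_minus_def using c1 by (simp add: c_def[symmetric])
    have X: "ereal (2 * q) / ereal (1 - cos \<omega>) = ereal (2 * q / (1 - c))" using c1 by (simp add: c_def[symmetric])
    have le: "2 * q / (1 + c) \<le> 2 * q / (1 - c)"
      using c c1 q by (intro divide_left_mono) auto
    have I1: "delta_int q' e' q 1 \<omega> pi = ereal (q' - 2 * q / (1 - c))"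
      unfolding delta_int_def d_plus_def d_minus_def rm1 rmPi rpPi rp1 using qQ le by (simp add: min_def)
    obtain v where v: "r_minus q e \<omega> = ereal v" "v \<le> 2 * q / (1 - c)" using rm c1 by auto
    have I: "delta_int q' e' q e \<omega> \<omega>' \<ge> ereal (q' - 2 * q / (1 - c))"
      unfolding delta_int_def d_plus_def d_minus_def rp rp' rm' v using ab u(2)[OF c1] v by simp
    show ?thesis using ext ext0 I1 I X unfolding Q_def by simp
  qed
qed

lemma partII:
  fixes q' e' q \<omega> :: real
  assumes q': "q' > 0" and e': "0 < e'" "e' < 1" and q: "q > 0"
    and w: "0 \<le> \<omega>" "\<omega> \<le> pi / 2"
    and h1: "ereal q' - ereal (2 * q) / ereal (1 - cos \<omega>) \<le> 0"
    and h2: "q - Qprime q' e' \<le> 0"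
  shows "\<exists>(e, \<omega>') \<in> D1. d_plus q' e' q e \<omega> \<omega>' * d_minus q' e' q e \<omega> \<omega>' = 0"
proof (cases "q' \<le> q")
  case True
  define y where "y = (1 - q' * (1 + e') / q) / e'"
  have A: "q' * (1 + e') / q \<le> 1 + e'" proof -
    have "q' * (1 + e') \<le> (1 + e') * q" using True e' by (simp add: mult.commute)
    then show ?thesis using q by (simp add: pos_divide_le_eq)
  qed
  have B: "1 - e' \<le> q' * (1 + e') / q" using h2 q e' unfolding Qprime_def by (simp add: field_simps)
  have y: "-1 \<le> y" "y \<le> 1" unfolding y_def using A B e' by (simp_all add: field_simps)
  have cy: "cos (arccos y) = y" using y by simp
  have ey: "1 - e' * y = q' * (1 + e') / q" unfolding y_def using e' by simp
  have pos: "q' * (1 + e') / q > 0" using q q' e' by simp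
  have "r_minus q' e' (arccos y) = ereal q"
    unfolding r_minus_def cy ey using pos q q' e' by simp
  moreover have "r_minus q 0 \<omega> = ereal q" unfolding r_minus_def by simp
  ultimately have "d_minus q' e' q 0 \<omega> (arccos y) = 0" unfolding d_minus_def by simp
  moreover have "(0, arccos y) \<in> D1" unfolding D1_def using y by (simp add: arccos_lbound arccos_ubound)
  ultimately show ?thesis by force
next
  case False
  define c where "c = cos \<omega>"
  have c: "0 \<le> c" "c \<le> 1" unfolding c_def using w by (auto intro: cos_ge_zero)
  define e where "e = (q' - q) / (q + q' * c)"
  have den: "q + q' * c > 0" using q q' c by (simp add: add_pos_nonneg)
  have e0: "0 \<le> e" unfolding e_def using False den by simp
  have key: "q' * (1 - c) \<le> 2 * q"
  proof (cases "c = 1")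
    case True then show ?thesis using q by simp
  next
    case False
    then have c1: "1 - c > 0" using c by simp
    have "ereal q' - ereal (2 * q / (1 - c)) \<le> 0" using h1 c1 by (simp add: c_def[symmetric])
    then have "q' \<le> 2 * q / (1 - c)" by simp
    then show ?thesis using c1 by (simp add: field_simps)
  qed
  have e1: "e \<le> 1" unfolding e_def using den key by (simp add: field_simps)
  have ec: "1 - e * c = q * (1 + c) / (q + q' * c)" unfolding e_def using den
    by (simp add: field_simps)
  have e1': "1 + e = q' * (1 + c) / (q + q' * c)" unfolding e_def using den
    by (simp add: field_simps)
  have pos: "q * (1 + c) / (q + q' * c) > 0" using q c den by simp
  have c1p: "1 + c \<noteq> 0" "q \<noteq> 0" "q + q' * c \<noteq> 0" using c q den by auto
  have val: "q * (1 + e) / (1 - e * c) = q'" unfolding ec e1'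
    using c1p by (simp add: divide_simps)
  have "r_minus q e \<omega> = ereal q'"
  proof -
    have "1 - e * c \<noteq> 0" using pos ec by linarith
    then have "r_minus q e \<omega> = ereal (q * (1 + e) / (1 - e * c))"
      unfolding r_minus_def c_def[symmetric] by simp
    then show ?thesis using val by simp
  qed
  moreover have "r_minus q' e' pi = ereal q'" unfolding r_minus_def using e' by simp
  ultimately have "d_minus q' e' q e \<omega> pi = 0" unfolding d_minus_def by simp
  moreover have "(e, pi) \<in> D1" unfolding D1_def using e0 e1 by simp
  ultimately show ?thesis by force
qed

theorem lemma3:
  fixes q' e' qmax :: real
  assumes "q' > 0" and "0 < e'" and "e' < 1" and "qmax > 0"
  shows "(\<forall>q \<omega> e \<omega>'. (q, \<omega>) \<in> D2 qmax \<longrightarrow> (e, \<omega>') \<in> D1 \<longrightarrow>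
            delta_int q' e' q e \<omega> \<omega>' \<ge> delta_int q' e' q 1 \<omega> pi
          \<and> delta_int q' e' q 1 \<omega> pi = ereal q' - ereal (2 * q) / ereal (1 - cos \<omega>)
          \<and> delta_ext q' e' q e \<omega> \<omega>' \<ge> delta_ext q' e' q 0 \<omega> pi
          \<and> delta_ext q' e' q 0 \<omega> pi = ereal (q - Qprime q' e'))
    \<and> (\<forall>q \<omega>. (q, \<omega>) \<in> D2 qmax \<longrightarrow>
          ((\<forall>(e, \<omega>') \<in> D1. internal_nodes q' e' q e \<omega> \<omega>')
             \<longleftrightarrow> ereal q' - ereal (2 * q) / ereal (1 - cos \<omega>) > 0)
        \<and> ((\<forall>(e, \<omega>') \<in> D1. external_nodes q' e' q e \<omega> \<omega>')
             \<longleftrightarrow> q - Qprime q' e' > 0))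
    \<and> (\<forall>q \<omega>. (q, \<omega>) \<in> D2 qmax
          \<longrightarrow> ereal q' - ereal (2 * q) / ereal (1 - cos \<omega>) \<le> 0
          \<longrightarrow> q - Qprime q' e' \<le> 0
          \<longrightarrow> (\<exists>(e, \<omega>') \<in> D1. d_plus q' e' q e \<omega> \<omega>' * d_minus q' e' q e \<omega> \<omega>' = 0))"
proof -
  have I: "\<forall>q \<omega> e \<omega>'. (q, \<omega>) \<in> D2 qmax \<longrightarrow> (e, \<omega>') \<in> D1 \<longrightarrow>
            delta_int q' e' q e \<omega> \<omega>' \<ge> delta_int q' e' q 1 \<omega> pi
          \<and> delta_int q' e' q 1 \<omega> pi = ereal q' - ereal (2 * q) / ereal (1 - cos \<omega>)
          \<and> delta_ext q' e' q e \<omega> \<omega>' \<ge> delta_ext q' e' q 0 \<omega> pi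
          \<and> delta_ext q' e' q 0 \<omega> pi = ereal (q - Qprime q' e')"
    using assms by (intro allI impI partI) (auto simp: D1_def D2_def)
  have II: "\<forall>q \<omega>. (q, \<omega>) \<in> D2 qmax \<longrightarrow>
          ((\<forall>(e, \<omega>') \<in> D1. internal_nodes q' e' q e \<omega> \<omega>')
             \<longleftrightarrow> ereal q' - ereal (2 * q) / ereal (1 - cos \<omega>) > 0)
        \<and> ((\<forall>(e, \<omega>') \<in> D1. external_nodes q' e' q e \<omega> \<omega>')
             \<longleftrightarrow> q - Qprime q' e' > 0)"
  proof (intro allI impI conjI)
  fix q \<omega>
  assume A: "(q, \<omega>) \<in> D2 qmax"
  have P: "\<And>e \<omega>'. (e, \<omega>') \<in> D1 \<Longrightarrow> delta_int q' e' q e \<omega> \<omega>' \<ge> delta_int q' e' q 1 \<omega> pi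
          \<and> delta_int q' e' q 1 \<omega> pi = ereal q' - ereal (2 * q) / ereal (1 - cos \<omega>)
          \<and> delta_ext q' e' q e \<omega> \<omega>' \<ge> delta_ext q' e' q 0 \<omega> pi
          \<and> delta_ext q' e' q 0 \<omega> pi = ereal (q - Qprime q' e')"
    using A assms by (intro partI) (auto simp: D1_def D2_def)
  have D1pi: "(1, pi) \<in> D1" "(0, pi) \<in> D1" by (auto simp: D1_def)
  show "(\<forall>(e, \<omega>') \<in> D1. internal_nodes q' e' q e \<omega> \<omega>')
             \<longleftrightarrow> ereal q' - ereal (2 * q) / ereal (1 - cos \<omega>) > 0"
  proof
    assume "\<forall>(e, \<omega>') \<in> D1. internal_nodes q' e' q e \<omega> \<omega>'"
    then have "internal_nodes q' e' q 1 \<omega> pi" using D1pi by auto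
    then have "delta_int q' e' q 1 \<omega> pi > 0" unfolding internal_nodes_def delta_int_def by simp
    then show "ereal q' - ereal (2 * q) / ereal (1 - cos \<omega>) > 0" using P[OF D1pi(1)] by simp
  next
    assume L: "ereal q' - ereal (2 * q) / ereal (1 - cos \<omega>) > 0"
    show "\<forall>(e, \<omega>') \<in> D1. internal_nodes q' e' q e \<omega> \<omega>'"
    proof (clarify)
      fix e \<omega>' assume B: "(e, \<omega>') \<in> D1"
      have "delta_int q' e' q e \<omega> \<omega>' > 0" using P[OF B] L by (metis order_less_le_trans)
      then show "internal_nodes q' e' q e \<omega> \<omega>'" unfolding internal_nodes_def delta_int_def by simp
    qed
  qed
  show "(\<forall>(e, \<omega>') \<in> D1. external_nodes q' e' q e \<omega> \<omega>')
             \<longleftrightarrow> q - Qprime q' e' > 0"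
  proof
    assume "\<forall>(e, \<omega>') \<in> D1. external_nodes q' e' q e \<omega> \<omega>'"
    then have "external_nodes q' e' q 0 \<omega> pi" using D1pi by auto
    then have "delta_ext q' e' q 0 \<omega> pi > 0" unfolding external_nodes_def delta_ext_def
      by (simp add: ereal_uminus_less_reorder)
    then show "q - Qprime q' e' > 0" using P[OF D1pi(2)] by simp
  next
    assume L: "q - Qprime q' e' > 0"
    show "\<forall>(e, \<omega>') \<in> D1. external_nodes q' e' q e \<omega> \<omega>'"
    proof (clarify)
      fix e \<omega>' assume B: "(e, \<omega>') \<in> D1"
      have "ereal (q - Qprime q' e') > 0" using L by simp
      then have "delta_ext q' e' q e \<omega> \<omega>' > 0" using P[OF B] by (metis order_less_le_trans)
      then show "external_nodes q' e' q e \<omega> \<omega>'" unfolding external_nodes_def delta_ext_def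
        by (simp add: ereal_uminus_less_reorder)
    qed
  qed
  qed
  have III: "\<forall>q \<omega>. (q, \<omega>) \<in> D2 qmax
          \<longrightarrow> ereal q' - ereal (2 * q) / ereal (1 - cos \<omega>) \<le> 0
          \<longrightarrow> q - Qprime q' e' \<le> 0
          \<longrightarrow> (\<exists>(e, \<omega>') \<in> D1. d_plus q' e' q e \<omega> \<omega>' * d_minus q' e' q e \<omega> \<omega>' = 0)"
  proof (intro allI impI)
  fix q \<omega>
  assume "(q, \<omega>) \<in> D2 qmax" "ereal q' - ereal (2 * q) / ereal (1 - cos \<omega>) \<le> 0"
     "q - Qprime q' e' \<le> 0"
  then show "\<exists>(e, \<omega>') \<in> D1. d_plus q' e' q e \<omega> \<omega>' * d_minus q' e' q e \<omega> \<omega>' = 0"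
    using assms by (intro partII) (auto simp: D2_def)
  qed
  show ?thesis using I II III by blast
qed

end
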